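(* Let $(S,|\cdot|)$ be a finite metric space, let $f\ge1$ be an integer, and let $\varepsilon>0$ be a real number. Assume there exists a well-separated pair decomposition for $S$ with separation ratio $c=2+4/\varepsilon$, and let $m$ be its size. Then the graph $G=(S,E)$ constructed from this decomposition as described in the context is an $f$-faulty-degree $(1+\varepsilon)$-spanner for $S$ that has at most $(2f+1)^2m$ edges.
   Context: $K_S$ is the complete graph on $S$; all graphs on $S$ have edge weights $|pq|$; $\delta_X$ is shortest-path distance in $X$; $X\setminus F$ is $X$ with the edges of $F$ removed. A graph $G=(S,E)$ is an $f$-faulty-degree $t$-spanner for $S$ if for every $F\subseteq E$ with $(S,F)$ of maximum degree at most $f$ and all $p,q\in S$, $\delta_{G\setminus F}(p,q)\le t\,\delta_{K_S\setminus F}(p,q)$. For non-empty $A,B\subseteq S$: $|AB|=\min\{|pq|:p\in A,q\in B\}$, $\mathrm{diam}(A)=\max\{|pq|:p,q\in A\}$; $A,B$ are well-separated with respect to $c>0$ if $|AB|\ge c\max(\mathrm{diam}(A),\mathrm{diam}(B))$. A well-separated pair decomposition (WSPD) of $S$ with separation ratio $c$ is a sequence $\{A_1,B_1\},\dots,\{A_m,B_m\}$ of pairs of non-empty subsets of $S$ such that each $A_i,B_i$ are well-separated w.r.t. $c$, and for any two distinct $p,q\in S$ there is exactly one $i$ with ($p\in A_i$ and $q\in B_i$) or ($p\in B_i$ and $q\in A_i$); $m$ is its size. Construction of $G$: for each $i$, let $A_i'=A_i$ if $|A_i|\le 2f+1$ and otherwise let $A_i'$ be an arbitrary subset of $A_i$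 of size $2f+1$; define $B_i'$ from $B_i$ analogously. $E$ consists of all edges $\{x,y\}$ with $x\in A_i'$, $y\in B_i'$, over all $i=1,\dots,m$. *)

theory Defs
  imports "HOL-Analysis.Analysis"
begin

text \<open>Points live in a metric space type; |pq| is dist p q.
  Graphs on S are given by edge sets (sets of 2-element subsets of S).\<close>

definition complete_edges :: "'a set \<Rightarrow> 'a set set" where
  "complete_edges S = {{p, q} | p q. p \<in> S \<and> q \<in> S \<and> p \<noteq> q}"

definition walk :: "'a set set \<Rightarrow> 'a list \<Rightarrow> bool" where
  "walk E xs \<longleftrightarrow> xs \<noteq> [] \<and> (\<forall>i. Suc i < length xs \<longrightarrow> {xs ! i, xs ! Suc i} \<in> E)"

definition walk_length :: "'a::metric_space list \<Rightarrow> real" where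
  "walk_length xs = (\<Sum>i<length xs - 1. dist (xs ! i) (xs ! Suc i))"

text \<open>Shortest-path distance; \<infinity> if no path exists.\<close>
definition graph_dist :: "'a::metric_space set set \<Rightarrow> 'a \<Rightarrow> 'a \<Rightarrow> ereal" where
  "graph_dist E p q =
     (INF xs \<in> {xs. walk E xs \<and> hd xs = p \<and> last xs = q}. ereal (walk_length xs))"

definition max_degree_le :: "'a set \<Rightarrow> 'a set set \<Rightarrow> nat \<Rightarrow> bool" where
  "max_degree_le S F f \<longleftrightarrow> (\<forall>v\<in>S. card {e \<in> F. v \<in> e} \<le> f)"

definition fault_degree_spanner :: "'a::metric_space set \<Rightarrow> 'a set set \<Rightarrow> nat \<Rightarrow> real \<Rightarrow> bool" where
  "fault_degree_spanner S E f t \<longleftrightarrow>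
     (\<forall>F. F \<subseteq> E \<and> max_degree_le S F f \<longrightarrow>
        (\<forall>p\<in>S. \<forall>q\<in>S. graph_dist (E - F) p q \<le> ereal t * graph_dist (complete_edges S - F) p q))"

definition set_dist :: "'a::metric_space set \<Rightarrow> 'a set \<Rightarrow> real" where
  "set_dist A B = Min {dist p q | p q. p \<in> A \<and> q \<in> B}"

definition set_diam :: "'a::metric_space set \<Rightarrow> real" where
  "set_diam A = Max {dist p q | p q. p \<in> A \<and> q \<in> A}"

definition well_separated :: "real \<Rightarrow> 'a::metric_space set \<Rightarrow> 'a set \<Rightarrow> bool" where
  "well_separated c A B \<longleftrightarrow> set_dist A B \<ge> c * max (set_diam A) (set_diam B)"

definition is_wspd :: "'a::metric_space set \<Rightarrow> real \<Rightarrow> nat \<Rightarrow> (nat \<Rightarrow> 'a set) \<Rightarrow> (nat \<Rightarrow> 'a set) \<Rightarrow> bool" where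
  "is_wspd S c m A B \<longleftrightarrow>
     (\<forall>i<m. A i \<noteq> {} \<and> B i \<noteq> {} \<and> A i \<subseteq> S \<and> B i \<subseteq> S \<and> well_separated c (A i) (B i)) \<and>
     (\<forall>p\<in>S. \<forall>q\<in>S. p \<noteq> q \<longrightarrow>
        (\<exists>!i. i < m \<and> ((p \<in> A i \<and> q \<in> B i) \<or> (p \<in> B i \<and> q \<in> A i))))"

definition rep_choice :: "nat \<Rightarrow> 'a set \<Rightarrow> 'a set \<Rightarrow> bool" where
  "rep_choice f X X' \<longleftrightarrow>
     (if card X \<le> 2*f+1 then X' = X else X' \<subseteq> X \<and> card X' = 2*f+1)"

definition wspd_graph_edges :: "nat \<Rightarrow> (nat \<Rightarrow> 'a set) \<Rightarrow> (nat \<Rightarrow> 'a set) \<Rightarrow> 'a set set" where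
  "wspd_graph_edges m A' B' = (\<Union>i<m. {{x, y} | x y. x \<in> A' i \<and> y \<in> B' i})"

end

theory Submission
  imports Defs
begin

lemma walk_Cons2: "walk E (x#y#zs) \<longleftrightarrow> {x,y}\<in>E \<and> walk E (y#zs)"
proof
  assume h: "walk E (x#y#zs)"
  have "Suc 0 < length (x#y#zs)" by simp
  then have "{(x#y#zs) ! 0, (x#y#zs) ! Suc 0} \<in> E" using h unfolding walk_def by blast
  then have "{x,y}\<in>E" by simp
  moreover have "walk E (y#zs)" unfolding walk_def
  proof (intro conjI allI impI)
    fix i assume "Suc i < length (y#zs)"
    then have "Suc (Suc i) < length (x#y#zs)" by simp
    then have "{(x#y#zs) ! Suc i, (x#y#zs) ! Suc (Suc i)} \<in> E" using h unfolding walk_def by blast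
    then show "{(y#zs) ! i, (y#zs) ! Suc i} \<in> E" by simp
  qed simp
  ultimately show "{x,y}\<in>E \<and> walk E (y#zs)" by blast
next
  assume h: "{x,y}\<in>E \<and> walk E (y#zs)"
  show "walk E (x#y#zs)" unfolding walk_def
  proof (intro conjI allI impI)
    fix i assume i: "Suc i < length (x#y#zs)"
    show "{(x#y#zs) ! i, (x#y#zs) ! Suc i} \<in> E"
    proof (cases i)
      case 0 then show ?thesis using h by simp
    next
      case (Suc j)
      then have "Suc j < length (y#zs)" using i by simp
      then have "{(y#zs) ! j, (y#zs) ! Suc j} \<in> E" using h unfolding walk_def by blast
      then show ?thesis using Suc by simp
    qed
  qed simp
qed

lemma walk_single: "walk E [x]" by (simp add: walk_def)

lemma walk_length_Cons2: "walk_length (x#y#zs) = dist x y + walk_length (y#zs)"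
  unfolding walk_length_def by (simp del: sum.lessThan_Suc add: sum.lessThan_Suc_shift)

lemma walk_length_single: "walk_length [x] = 0"
  unfolding walk_length_def by simp

lemma walk_append:
  "walk E xs \<Longrightarrow> walk E ys \<Longrightarrow> last xs = hd ys \<Longrightarrow>
   walk E (xs @ tl ys) \<and> walk_length (xs @ tl ys) = walk_length xs + walk_length ys
   \<and> hd (xs @ tl ys) = hd xs \<and> last (xs @ tl ys) = last ys"
proof (induction xs)
  case Nil then show ?case by (simp add: walk_def)
next
  case (Cons x xs)
  show ?case
  proof (cases xs)
    case Nil
    have "ys \<noteq> []" using Cons.prems by (simp add: walk_def)
    then have "ys = x # tl ys" using Cons.prems Nil by (metis hd_Cons_tl last_ConsL)
    then show ?thesis using Cons.prems Nil
      by (metis append_Cons append_Nil add_0 list.sel(1) walk_length_single)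
  next
    case (Cons y zs)
    have w: "walk E xs" and e: "{x,y}\<in>E" using Cons.prems(1) unfolding Cons by (simp_all add: walk_Cons2)
    have l: "last xs = hd ys" using Cons.prems(3) Cons by simp
    from Cons.IH[OF w Cons.prems(2) l] obtain us where us: "xs @ tl ys = y # us"
      using Cons by auto
    have IH: "walk E (y # us) \<and> walk_length (y#us) = walk_length xs + walk_length ys
      \<and> last (y#us) = last ys" using Cons.IH[OF w Cons.prems(2) l] unfolding us by blast
    have eq: "(x # xs) @ tl ys = x # y # us" using us by simp
    show ?thesis unfolding eq using IH e Cons
      by (simp add: walk_Cons2 walk_length_Cons2)
  qed
qed

lemma walk_rev: "walk E xs \<Longrightarrow> walk E (rev xs) \<and> walk_length (rev xs) = walk_length xs"
proof (induction xs rule: induct_list012)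
  case 1 then show ?case by simp
next
  case (2 x) then show ?case by simp
next
  case (3 x y zs)
  have w: "walk E (y#zs)" and e: "{x,y}\<in>E" using "3.prems" by (simp_all add: walk_Cons2)
  have IH: "walk E (rev (y#zs)) \<and> walk_length (rev (y#zs)) = walk_length (y#zs)"
    using "3.IH"(2) w by blast
  have wy: "walk E [y,x]" using e by (simp add: walk_Cons2 walk_single insert_commute)
  have "last (rev (y#zs)) = hd [y,x]" by simp
  from walk_append[OF conjunct1[OF IH] wy this]
  have "walk E (rev (y#zs) @ [x]) \<and> walk_length (rev (y#zs) @ [x]) = walk_length (rev (y#zs)) + walk_length [y,x]"
    by simp
  then show ?case using IH
    by (simp add: walk_length_Cons2 walk_length_single dist_commute)
qed

lemma gd_le_walk: "walk E xs \<Longrightarrow> hd xs = p \<Longrightarrow> last xs = q \<Longrightarrow> graph_dist E p q \<le> ereal (walk_length xs)"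
  unfolding graph_dist_def by (rule INF_lower) auto

lemma gd_refl: "graph_dist E p p \<le> ereal 0"
  using gd_le_walk[of E "[p]" p p] by (simp add: walk_single walk_length_single)

lemma gd_edge: "{p,q}\<in>E \<Longrightarrow> graph_dist E p q \<le> ereal (dist p q)"
  using gd_le_walk[of E "[p,q]" p q] by (simp add: walk_Cons2 walk_single walk_length_Cons2 walk_length_single)

lemma gd_sym: "graph_dist E q p \<le> graph_dist E p q"
  unfolding graph_dist_def[of E p q]
proof (rule INF_greatest)
  fix xs assume "xs \<in> {xs. walk E xs \<and> hd xs = p \<and> last xs = q}"
  then have h: "walk E xs" "hd xs = p" "last xs = q" by auto
  then have "xs \<noteq> []" by (simp add: walk_def)
  then have "hd (rev xs) = q" "last (rev xs) = p" using h by (auto simp: hd_rev last_rev)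
  then show "graph_dist E q p \<le> ereal (walk_length xs)"
    using gd_le_walk[of E "rev xs" q p] walk_rev[OF h(1)] by simp
qed

lemma gd_approx:
  assumes "graph_dist E p q < ereal a"
  obtains xs where "walk E xs" "hd xs = p" "last xs = q" "walk_length xs < a"
  using assms unfolding graph_dist_def by (auto simp: INF_less_iff)

lemma gd_trans:
  assumes "graph_dist E p q \<le> ereal a" "graph_dist E q r \<le> ereal b"
  shows "graph_dist E p r \<le> ereal (a+b)"
proof (rule ereal_le_epsilon2)
  fix e :: real assume e: "0 < e"
  have "ereal a < ereal (a + e/2)" using e by simp
  then have "graph_dist E p q < ereal (a + e/2)" using assms(1) by (rule order.strict_trans1[rotated])
  then obtain xs where xs: "walk E xs" "hd xs = p" "last xs = q" "walk_length xs < a + e/2"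
    by (rule gd_approx)
  have "ereal b < ereal (b + e/2)" using e by simp
  then have "graph_dist E q r < ereal (b + e/2)" using assms(2) by (rule order.strict_trans1[rotated])
  then obtain ys where ys: "walk E ys" "hd ys = q" "last ys = r" "walk_length ys < b + e/2"
    by (rule gd_approx)
  from walk_append[OF xs(1) ys(1)] xs ys
  have "graph_dist E p r \<le> ereal (walk_length xs + walk_length ys)"
    using gd_le_walk[of E "xs @ tl ys" p r] by simp
  also have "\<dots> \<le> ereal (a+b) + ereal e" using xs ys by simp
  finally show "graph_dist E p r \<le> ereal (a+b) + ereal e" .
qed

lemma gd_mult:
  assumes t: "t > 0" and h: "\<And>xs. walk E' xs \<Longrightarrow> hd xs = p \<Longrightarrow> last xs = q \<Longrightarrow> G \<le> ereal (t * walk_length xs)"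
  shows "G \<le> ereal t * graph_dist E' p q"
proof -
  let ?W = "{xs. walk E' xs \<and> hd xs = p \<and> last xs = q}"
  have "bij ((*) (ereal t))"
    apply (rule bij_betw_byWitness[of _ "\<lambda>x. (x::ereal) / t"], auto simp: t ereal_mult_divide)
    using t ereal_divide_eq by auto
  then have "ereal t * Inf ((\<lambda>xs. ereal (walk_length xs)) ` ?W) = Inf ((*) (ereal t) ` (\<lambda>xs. ereal (walk_length xs)) ` ?W)"
    by (simp add: t ereal_mult_left_mono less_imp_le mono_def mono_bij_Inf)
  also have "\<dots> = (INF xs\<in>?W. ereal t * ereal (walk_length xs))" by (simp add: image_image)
  finally have eq: "ereal t * graph_dist E' p q = (INF xs\<in>?W. ereal (t * walk_length xs))"
    unfolding graph_dist_def by simp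
  show ?thesis unfolding eq by (rule INF_greatest) (use h in auto)
qed


lemma diam_ge:
  assumes "finite X" "a \<in> X" "b \<in> X"
  shows "dist a b \<le> set_diam X"
proof -
  have "finite {dist p q | p q. p \<in> X \<and> q \<in> X}" using assms by (intro finite_image_set2) auto
  then show ?thesis unfolding set_diam_def using assms by (intro Max_ge) auto
qed

lemma setdist_le:
  assumes "finite A" "finite B" "a \<in> A" "b \<in> B"
  shows "set_dist A B \<le> dist a b"
proof -
  have "finite {dist p q | p q. p \<in> A \<and> q \<in> B}" using assms by (intro finite_image_set2) auto
  then show ?thesis unfolding set_dist_def using assms by (intro Min_le) auto
qed

lemma exists_nonfault:
  assumes few: "\<And>Z. finite Z \<Longrightarrow> card {z\<in>Z. {v,z}\<in>F} \<le> f"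
    and Z: "finite Z" "card Z \<ge> f+1"
  shows "\<exists>z\<in>Z. {v,z} \<notin> F"
proof (rule ccontr)
  assume "\<not> ?thesis"
  then have "{z\<in>Z. {v,z}\<in>F} = Z" by auto
  then show False using few[OF Z(1)] Z(2) by simp
qed

lemma candidates:
  assumes S: "finite S" "X \<subseteq> S" "p \<in> X"
    and r: "rep_choice f X X'"
    and few: "\<And>Z. finite Z \<Longrightarrow> card {z\<in>Z. {p,z}\<in>F} \<le> f"
  obtains C where "C \<subseteq> X'" "C = {p} \<or> (finite C \<and> card C \<ge> f+1)"
    "\<forall>x\<in>C. x = p \<or> {p,x} \<notin> F"
proof (cases "p \<in> X'")
  case True
  show ?thesis by (rule that[of "{p}"]) (use True in auto)
next
  case False
  have fX: "finite X" using S finite_subset by blast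
  have X': "X' \<subseteq> X" "card X' = 2*f+1"
    using r False S(3) unfolding rep_choice_def by (auto split: if_splits)
  have fX': "finite X'" using X'(1) fX finite_subset by blast
  let ?C = "{x\<in>X'. {p,x}\<notin>F}"
  have eq: "?C \<union> {x\<in>X'. {p,x}\<in>F} = X'" by blast
  have u: "card (?C \<union> {x\<in>X'. {p,x}\<in>F}) \<le> card ?C + card {x\<in>X'. {p,x}\<in>F}"
    by (rule card_Un_le)
  have "card X' \<le> card ?C + card {x\<in>X'. {p,x}\<in>F}"
    using u by (simp only: eq)
  then have "card ?C \<ge> f+1" using few[OF fX'] X'(2) by linarith
  moreover have "finite ?C" using fX' by simp
  ultimately show ?thesis by (intro that[of ?C]) auto
qed

lemma step:
  fixes p q :: "'a::metric_space"
  assumes S: "finite S" "X \<subseteq> S" "Y \<subseteq> S" and pq: "p \<in> X" "q \<in> Y" "p \<noteq> q" "{p,q} \<notin> F"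
    and cX: "c * set_diam X \<le> dist p q" and cY: "c * set_diam Y \<le> dist p q"
    and rX: "rep_choice f X X'" and rY: "rep_choice f Y Y'"
    and EXY: "\<forall>x\<in>X'. \<forall>y\<in>Y'. {x,y} \<in> G"
    and few: "\<And>v Z. v \<in> S \<Longrightarrow> finite Z \<Longrightarrow> card {z\<in>Z. {v,z}\<in>F} \<le> f"
    and IH: "\<And>x y. x \<in> S \<Longrightarrow> y \<in> S \<Longrightarrow> dist x y < dist p q \<Longrightarrow> (x = y \<or> {x,y} \<notin> F)
               \<Longrightarrow> graph_dist (G - F) x y \<le> ereal (t * dist x y)"
    and eps: "\<epsilon> > 0" "c = 2 + 4/\<epsilon>" "t = 1 + \<epsilon>"
  shows "graph_dist (G - F) p q \<le> ereal (t * dist p q)"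
proof -
  have fX: "finite X" "finite Y" using S finite_subset by blast+
  have X'X: "X' \<subseteq> X" "Y' \<subseteq> Y" using rX rY unfolding rep_choice_def by (auto split: if_splits)
  have pS: "p \<in> S" "q \<in> S" using S pq by auto
  have D: "dist p q > 0" using pq by simp
  have c2: "c > 2" using eps by simp
  have dX0: "set_diam X \<ge> 0" using diam_ge[OF fX(1) pq(1) pq(1)] by simp
  have dY0: "set_diam Y \<ge> 0" using diam_ge[OF fX(2) pq(2) pq(2)] by simp
  have dXlt: "set_diam X < dist p q"
  proof -
    have "2 * set_diam X \<le> c * set_diam X" using c2 dX0 by (intro mult_right_mono) auto
    then show ?thesis using cX D dX0 by linarith
  qed
  have dYlt: "set_diam Y < dist p q"
  proof -
    have "2 * set_diam Y \<le> c * set_diam Y" using c2 dY0 by (intro mult_right_mono) auto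
    then show ?thesis using cY D dY0 by linarith
  qed
  obtain CX where CX: "CX \<subseteq> X'" "CX = {p} \<or> (finite CX \<and> card CX \<ge> f+1)"
    "\<forall>x\<in>CX. x = p \<or> {p,x} \<notin> F"
    using candidates[OF S(1,2) pq(1) rX few[OF pS(1)]] by blast
  obtain CY where CY: "CY \<subseteq> Y'" "CY = {q} \<or> (finite CY \<and> card CY \<ge> f+1)"
    "\<forall>y\<in>CY. y = q \<or> {q,y} \<notin> F"
    using candidates[OF S(1,3) pq(2) rY few[OF pS(2)]] by blast
  have "\<exists>x\<in>CX. \<exists>y\<in>CY. {x,y} \<notin> F"
  proof (cases "CX = {p}")
    case True
    show ?thesis
    proof (cases "CY = {q}")
      case True
      then show ?thesis using \<open>CX = {p}\<close> pq by auto
    next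
      case False
      then have "finite CY" "card CY \<ge> f+1" using CY by auto
      then obtain y where "y \<in> CY" "{p,y} \<notin> F" using exists_nonfault[OF few[OF pS(1)]] by blast
      then show ?thesis using True by auto
    qed
  next
    case False
    then have fc: "finite CX" "card CX \<ge> f+1" using CX by auto
    show ?thesis
    proof (cases "CY = {q}")
      case True
      obtain x where "x \<in> CX" "{q,x} \<notin> F" using exists_nonfault[OF few[OF pS(2)] fc] by blast
      then show ?thesis using True by (auto simp: insert_commute)
    next
      case False
      then have fy: "finite CY" "card CY \<ge> f+1" using CY by auto
      have "CX \<noteq> {}" using fc by auto
      then obtain x where x: "x \<in> CX" by blast
      then have "x \<in> S" using CX(1) X'X S by blast
      then obtain y where "y \<in> CY" "{x,y} \<notin> F" using exists_nonfault[OF few fy] by blast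
      then show ?thesis using x by blast
    qed
  qed
  then obtain x y where xy: "x \<in> CX" "y \<in> CY" "{x,y} \<notin> F" by blast
  have xX: "x \<in> X" and yY: "y \<in> Y" using xy CX CY X'X by blast+
  have xS: "x \<in> S" and yS: "y \<in> S" using xX yY S by blast+
  have dpx: "dist p x \<le> set_diam X" using diam_ge[OF fX(1) pq(1) xX] .
  have dyq: "dist y q \<le> set_diam Y" using diam_ge[OF fX(2) yY pq(2)] .
  have g1: "graph_dist (G - F) p x \<le> ereal (t * dist p x)"
  proof -
    have lt: "dist p x < dist p q" using dpx dXlt by linarith
    have "p = x \<or> {p,x} \<notin> F" using CX(3) xy(1) by auto
    then show ?thesis by (rule IH[OF pS(1) xS lt])
  qed
  have g2: "graph_dist (G - F) x y \<le> ereal (dist x y)"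
    using gd_edge[of x y "G - F"] EXY xy CX(1) CY(1) by blast
  have g3: "graph_dist (G - F) y q \<le> ereal (t * dist y q)"
  proof -
    have lt: "dist y q < dist p q" using dyq dYlt by linarith
    have "y = q \<or> {y,q} \<notin> F" using CY(3) xy(2) by (auto simp: insert_commute)
    then show ?thesis by (rule IH[OF yS pS(2) lt])
  qed
  have g: "graph_dist (G - F) p q \<le> ereal (t * dist p x + dist x y + t * dist y q)"
    using gd_trans[OF gd_trans[OF g1 g2] g3] .
  have tri: "dist x y \<le> dist p x + dist p q + dist y q"
    using dist_triangle[of x y p] dist_triangle[of p y q] dist_commute[of x p] dist_commute[of q y]
    by linarith
  have ec: "\<epsilon> * c = 2 * (2 + \<epsilon>)" using eps by (simp add: field_simps)
  have key: "(2 + \<epsilon>) * (set_diam X + set_diam Y) \<le> \<epsilon> * dist p q"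
  proof -
    have e1: "\<epsilon> * (c * set_diam X + c * set_diam Y) = (\<epsilon> * c) * (set_diam X + set_diam Y)"
      by (simp add: algebra_simps)
    have e2a: "\<epsilon> * (c * set_diam X + c * set_diam Y) \<le> \<epsilon> * (2 * dist p q)"
      using cX cY eps(1) by (intro mult_left_mono) auto
    have e2: "(\<epsilon> * c) * (set_diam X + set_diam Y) \<le> 2 * (\<epsilon> * dist p q)"
    proof -
      have "\<epsilon> * (2 * dist p q) = 2 * (\<epsilon> * dist p q)" by simp
      then show ?thesis using e2a e1 by linarith
    qed
    have e3: "2 * ((2 + \<epsilon>) * (set_diam X + set_diam Y)) = (\<epsilon> * c) * (set_diam X + set_diam Y)"
      unfolding ec by (simp add: mult.assoc)
    show ?thesis using e2 e3 by linarith
  qed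
  have t0: "t \<ge> 0" using eps by simp
  have "t * dist p x + dist x y + t * dist y q \<le> (t+1) * dist p x + dist p q + (t+1) * dist y q"
    using tri by (simp add: algebra_simps)
  also have "\<dots> \<le> (t+1) * set_diam X + dist p q + (t+1) * set_diam Y"
    using dpx dyq t0 by (intro add_mono mult_left_mono) auto
  also have "\<dots> = (2 + \<epsilon>) * (set_diam X + set_diam Y) + dist p q"
    using eps by (simp add: algebra_simps)
  also have "\<dots> \<le> t * dist p q" using key eps by (simp add: algebra_simps)
  finally show ?thesis using g by (meson ereal_less_eq(3) order_trans)
qed


lemma rep_props:
  assumes "finite S" "X \<subseteq> S" "rep_choice f X X'"
  shows "X' \<subseteq> X \<and> card X' \<le> 2*f+1 \<and> finite X'"
proof -
  have fX: "finite X" using assms finite_subset by blast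
  show ?thesis
  proof (cases "card X \<le> 2*f+1")
    case True
    then have "X' = X" using assms(3) unfolding rep_choice_def by simp
    then show ?thesis using True fX by simp
  next
    case False
    then have "X' \<subseteq> X" "card X' = 2*f+1" using assms(3) unfolding rep_choice_def by auto
    then show ?thesis using fX finite_subset by auto
  qed
qed

theorem theorem3:
  fixes S :: "'a::metric_space set" and f m :: nat and \<epsilon> :: real
    and A B A' B' :: "nat \<Rightarrow> 'a set"
  assumes "finite S" and "f \<ge> 1" and "\<epsilon> > 0"
    and "is_wspd S (2 + 4 / \<epsilon>) m A B"
    and "\<forall>i<m. rep_choice f (A i) (A' i) \<and> rep_choice f (B i) (B' i)"
  shows "fault_degree_spanner S (wspd_graph_edges m A' B') f (1 + \<epsilon>)
         \<and> card (wspd_graph_edges m A' B') \<le> (2*f+1)^2 * m"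
proof -
  define E where "E = wspd_graph_edges m A' B'"
  define c where "c = 2 + 4 / \<epsilon>"
  define t where "t = 1 + \<epsilon>"
  have W: "\<And>i. i < m \<Longrightarrow> A i \<noteq> {} \<and> B i \<noteq> {} \<and> A i \<subseteq> S \<and> B i \<subseteq> S \<and> well_separated c (A i) (B i)"
    using assms(4) unfolding is_wspd_def c_def by blast
  have U: "\<And>p q. p \<in> S \<Longrightarrow> q \<in> S \<Longrightarrow> p \<noteq> q \<Longrightarrow>
      \<exists>i. i < m \<and> ((p \<in> A i \<and> q \<in> B i) \<or> (p \<in> B i \<and> q \<in> A i))"
    using assms(4) unfolding is_wspd_def by metis
  have RA: "\<And>i. i < m \<Longrightarrow> rep_choice f (A i) (A' i)" and RB: "\<And>i. i < m \<Longrightarrow> rep_choice f (B i) (B' i)"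
    using assms(5) by auto
  have PA: "\<And>i. i < m \<Longrightarrow> A' i \<subseteq> A i \<and> card (A' i) \<le> 2*f+1 \<and> finite (A' i)"
    using rep_props[OF assms(1)] W RA by blast
  have PB: "\<And>i. i < m \<Longrightarrow> B' i \<subseteq> B i \<and> card (B' i) \<le> 2*f+1 \<and> finite (B' i)"
    using rep_props[OF assms(1)] W RB by blast
  have Eimg: "E = (\<Union>i<m. (\<lambda>(x,y). {x,y}) ` (A' i \<times> B' i))"
    unfolding E_def wspd_graph_edges_def by auto
  have finE: "finite E" unfolding Eimg using PA PB by auto
  have edgeE: "\<And>i x y. i < m \<Longrightarrow> x \<in> A' i \<Longrightarrow> y \<in> B' i \<Longrightarrow> {x,y} \<in> E"
    unfolding E_def wspd_graph_edges_def by blast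
  have cardE: "card E \<le> (2*f+1)^2 * m"
  proof -
    have "card E \<le> (\<Sum>i<m. card ((\<lambda>(x,y). {x,y}) ` (A' i \<times> B' i)))"
      unfolding Eimg by (rule card_UN_le) simp
    also have "\<dots> \<le> (\<Sum>i<m. (2*f+1)^2)"
    proof (rule sum_mono)
      fix i assume "i \<in> {..<m}"
      then have i: "i < m" by simp
      have "card ((\<lambda>(x,y). {x,y}) ` (A' i \<times> B' i)) \<le> card (A' i \<times> B' i)"
        by (rule card_image_le) (use PA[OF i] PB[OF i] in simp)
      also have "\<dots> = card (A' i) * card (B' i)" by (rule card_cartesian_product)
      also have "\<dots> \<le> (2*f+1) * (2*f+1)" using PA[OF i] PB[OF i] by (intro mult_le_mono) auto
      finally show "card ((\<lambda>(x,y). {x,y}) ` (A' i \<times> B' i)) \<le> (2*f+1)^2"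
        by (simp add: power2_eq_square)
    qed
    also have "\<dots> = (2*f+1)^2 * m" by simp
    finally show ?thesis .
  qed
  have c0: "c > 0" using assms(3) unfolding c_def by (simp add: add_pos_pos)
  have spanner: "fault_degree_spanner S E f t"
    unfolding fault_degree_spanner_def
  proof (intro allI impI ballI)
    fix F p q
    assume Fh: "F \<subseteq> E \<and> max_degree_le S F f" and pS: "p \<in> S" and qS: "q \<in> S"
    have finF: "finite F" using Fh finE finite_subset by blast
    have few: "\<And>v (Z::'a set). v \<in> S \<Longrightarrow> finite Z \<Longrightarrow> card {z\<in>Z. {v,z}\<in>F} \<le> f"
    proof -
      fix v and Z :: "'a set" assume v: "v \<in> S" and Z: "finite Z"
      have inj: "inj_on (\<lambda>z. {v,z}) {z\<in>Z. {v,z}\<in>F}"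
        by (auto simp: inj_on_def doubleton_eq_iff)
      have sub: "(\<lambda>z. {v,z}) ` {z\<in>Z. {v,z}\<in>F} \<subseteq> {e\<in>F. v\<in>e}" by auto
      have "card {z\<in>Z. {v,z}\<in>F} = card ((\<lambda>z. {v,z}) ` {z\<in>Z. {v,z}\<in>F})"
        using inj by (simp add: card_image)
      also have "\<dots> \<le> card {e\<in>F. v\<in>e}" using sub finF by (intro card_mono) auto
      also have "\<dots> \<le> f" using Fh v unfolding max_degree_le_def by blast
      finally show "card {z\<in>Z. {v,z}\<in>F} \<le> f" .
    qed
    define L where "L = (\<lambda>(p::'a) (q::'a). {z\<in>S\<times>S. dist (fst z) (snd z) < dist p q})"
    have finL: "\<And>p q. finite (L p q)" unfolding L_def using assms(1) by simp
    have main: "\<And>n p q. card (L p q) = n \<Longrightarrow> p \<in> S \<Longrightarrow> q \<in> S \<Longrightarrow> (p = q \<or> {p,q} \<notin> F) \<Longrightarrow>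
        graph_dist (E - F) p q \<le> ereal (t * dist p q)"
    proof -
      fix n
      show "\<And>p q. card (L p q) = n \<Longrightarrow> p \<in> S \<Longrightarrow> q \<in> S \<Longrightarrow> (p = q \<or> {p,q} \<notin> F) \<Longrightarrow>
        graph_dist (E - F) p q \<le> ereal (t * dist p q)"
      proof (induction n rule: less_induct)
        case (less n p q)
        have IH: "\<And>x y. x \<in> S \<Longrightarrow> y \<in> S \<Longrightarrow> dist x y < dist p q \<Longrightarrow> (x = y \<or> {x,y} \<notin> F)
               \<Longrightarrow> graph_dist (E - F) x y \<le> ereal (t * dist x y)"
        proof -
          fix x y assume xy: "x \<in> S" "y \<in> S" "dist x y < dist p q" "x = y \<or> {x,y} \<notin> F"
          have "L x y \<subseteq> L p q" using xy(3) unfolding L_def by auto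
          moreover have "(x,y) \<in> L p q - L x y" using xy unfolding L_def by auto
          ultimately have "L x y \<subset> L p q" by blast
          then have "card (L x y) < n" using less.prems(1) finL psubset_card_mono by blast
          then show "graph_dist (E - F) x y \<le> ereal (t * dist x y)"
            using less.IH xy(1,2,4) by blast
        qed
        show ?case
        proof (cases "p = q")
          case True
          then show ?thesis using gd_refl[of "E - F" p] by simp
        next
          case False
          then have pq: "{p,q} \<notin> F" using less.prems(4) by simp
          obtain i where i: "i < m" "(p \<in> A i \<and> q \<in> B i) \<or> (p \<in> B i \<and> q \<in> A i)"
            using U[OF less.prems(2,3) False] by blast
          have Wi: "A i \<subseteq> S" "B i \<subseteq> S" "well_separated c (A i) (B i)" using W[OF i(1)] by auto
          have fAB: "finite (A i)" "finite (B i)" using Wi assms(1) finite_subset by blast+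
          have cmax: "c * set_diam (A i) \<le> c * max (set_diam (A i)) (set_diam (B i))"
                     "c * set_diam (B i) \<le> c * max (set_diam (A i)) (set_diam (B i))"
            using c0 by (auto intro: mult_left_mono)
          have ws: "c * max (set_diam (A i)) (set_diam (B i)) \<le> set_dist (A i) (B i)"
            using Wi(3) unfolding well_separated_def by simp
          show ?thesis
          proof (cases "p \<in> A i \<and> q \<in> B i")
            case True
            have sd: "set_dist (A i) (B i) \<le> dist p q" using setdist_le[OF fAB] True by blast
            show ?thesis
              by (rule step[OF assms(1) Wi(1,2) conjunct1[OF True] conjunct2[OF True] False pq
                    _ _ RA[OF i(1)] RB[OF i(1)] _ few IH assms(3) c_def t_def])
                 (use cmax ws sd edgeE[OF i(1)] in auto)
          next
            case False
            then have T: "p \<in> B i" "q \<in> A i" using i(2) by auto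
            have sd: "set_dist (A i) (B i) \<le> dist p q"
              using setdist_le[OF fAB T(2) T(1)] by (simp add: dist_commute)
            show ?thesis
              by (rule step[OF assms(1) Wi(2,1) T(1) T(2) \<open>p \<noteq> q\<close> pq
                    _ _ RB[OF i(1)] RA[OF i(1)] _ few IH assms(3) c_def t_def])
                 (use cmax ws sd edgeE[OF i(1)] in \<open>auto\<close>,
                  metis edgeE[OF i(1)] insert_commute)
          qed
        qed
      qed
    qed
    have walkclaim: "\<And>xs. walk (complete_edges S - F) xs \<Longrightarrow>
        graph_dist (E - F) (hd xs) (last xs) \<le> ereal (t * walk_length xs)"
    proof -
      fix xs
      show "walk (complete_edges S - F) xs \<Longrightarrow>
        graph_dist (E - F) (hd xs) (last xs) \<le> ereal (t * walk_length xs)"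
      proof (induction xs rule: induct_list012)
        case 1 then show ?case by (simp add: walk_def)
      next
        case (2 x) then show ?case using gd_refl[of "E - F" x] by (simp add: walk_length_single)
      next
        case (3 x y zs)
        have e: "{x,y} \<in> complete_edges S" "{x,y} \<notin> F" and w: "walk (complete_edges S - F) (y#zs)"
          using "3.prems" by (simp_all add: walk_Cons2)
        have xyS: "x \<in> S" "y \<in> S" "x \<noteq> y" using e(1) unfolding complete_edges_def
          by (auto simp: doubleton_eq_iff)
        have g1: "graph_dist (E - F) x y \<le> ereal (t * dist x y)"
          using main[OF refl xyS(1,2)] e(2) by blast
        have g2: "graph_dist (E - F) y (last (y#zs)) \<le> ereal (t * walk_length (y#zs))"
          using "3.IH"(2)[OF w] by simp
        show ?case using gd_trans[OF g1 g2]
          by (simp add: walk_length_Cons2 distrib_left)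
      qed
    qed
    have t0: "t > 0" using assms(3) unfolding t_def by simp
    show "graph_dist (E - F) p q \<le> ereal t * graph_dist (complete_edges S - F) p q"
      by (rule gd_mult[OF t0]) (use walkclaim in blast)
  qed
  show ?thesis using spanner cardE unfolding E_def t_def by blast
qed

end
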